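(* For $n,m\in\mathbb{N}$ and $i\in I_{nm}$ one has $h_n(\sigma_{m,n}(i))=\sigma_{m,n}(h_{nm}(i))$.
   Context: $\Gamma_0(N)=\{\begin{pmatrix}a&b\\c&d\end{pmatrix}\in SL(2,\mathbb{Z}):N\mid c\}$. $I_N=\{[x:y]_N:\gcd(x,y,N)=1\}$, $[x:y]_N$ the class of $(x,y)$ under $(x,y)\sim(kx,ky)\bmod N$, $\gcd(k,N)=1$; the right coset $\Gamma_0(N)\begin{pmatrix}a&b\\c&d\end{pmatrix}$ is identified with $[c:d]_N\in I_N$, and $R_i^{N,1}$ denotes a representative of coset $i$. $\sigma_{m,n}:I_{nm}\to I_n$ is the projection $[x:y]_{nm}\mapsto[x:y]_n$ (induced by $\Gamma_0(nm)g\mapsto\Gamma_0(n)g$). For $i\in I_N$, $A_i=\begin{pmatrix}c&b\\0&N/c\end{pmatrix}$ where $(c,b)$ (with $c\ge1$, $c\mid N$, $0\le b\le N/c-1$, $\gcd(c,b,N/c)=1$) is the pair mapped to $i$ by $(c,b)\mapsto[c:d_N(c,b)]_N$, $d_N(c,b)=\min_{0\le k\le c-1}\{c+b+kN/c:\gcd(c,b+kN/c)=1\}$ (a bijection). $h_N:I_N\to I_N$ sends $i$ to the unique $l\in I_N$ with $\begin{pmatrix}0&1\\-N&0\end{pmatrix}R_i^{N,1}\in SL(2,\mathbb{Z})A_l$. *)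

theory Defs
  imports Main
begin

text \<open>2x2 integer matrices  M2 a b c d  =  (a b; c d).\<close>
datatype mat2 = M2 int int int int

fun mmul :: "mat2 \<Rightarrow> mat2 \<Rightarrow> mat2" where
  "mmul (M2 a b c d) (M2 a' b' c' d') =
     M2 (a*a' + b*c') (a*b' + b*d') (c*a' + d*c') (c*b' + d*d')"

definition SL2 :: "mat2 set" where
  "SL2 = {M2 a b c d | a b c d. a*d - b*c = 1}"

text \<open>The class [x:y]_N: all (kx mod N, ky mod N) with gcd(k,N)=1.\<close>
definition pclass :: "nat \<Rightarrow> int \<Rightarrow> int \<Rightarrow> (int \<times> int) set" where
  "pclass N x y = {((k*x) mod int N, (k*y) mod int N) | k. coprime k (int N)}"

definition I_set :: "nat \<Rightarrow> (int \<times> int) set set" where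
  "I_set N = {pclass N x y | x y. gcd (gcd x y) (int N) = 1}"

text \<open>sigma_{m,n} : I_{nm} \<rightarrow> I_n, [x:y]_{nm} \<mapsto> [x:y]_n.\<close>
definition sigma :: "nat \<Rightarrow> nat \<Rightarrow> (int \<times> int) set \<Rightarrow> (int \<times> int) set" where
  "sigma m n i = (THE j. \<exists>x y. i = pclass (n*m) x y \<and> j = pclass n x y)"

text \<open>Right coset Gamma_0(N) g, g = (a b; c d), is identified with [c:d]_N.\<close>
fun coset_class :: "nat \<Rightarrow> mat2 \<Rightarrow> (int \<times> int) set" where
  "coset_class N (M2 a b c d) = pclass N c d"

definition rep :: "nat \<Rightarrow> (int \<times> int) set \<Rightarrow> mat2" where
  "rep N i = (SOME R. R \<in> SL2 \<and> coset_class N R = i)"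

definition pairs :: "nat \<Rightarrow> (nat \<times> nat) set" where
  "pairs N = {(c, b). c \<ge> 1 \<and> c dvd N \<and> b < N div c \<and> gcd (gcd c b) (N div c) = 1}"

definition dN :: "nat \<Rightarrow> nat \<Rightarrow> nat \<Rightarrow> nat" where
  "dN N c b = Min {c + b + k * (N div c) | k. k \<le> c - 1 \<and> coprime c (b + k * (N div c))}"

definition A_mat :: "nat \<Rightarrow> (int \<times> int) set \<Rightarrow> mat2" where
  "A_mat N i = (THE M. \<exists>c b. (c, b) \<in> pairs N \<and> pclass N (int c) (int (dN N c b)) = i
                  \<and> M = M2 (int c) (int b) 0 (int (N div c)))"

definition W :: "nat \<Rightarrow> mat2" where
  "W N = M2 0 1 (- int N) 0"

definition h :: "nat \<Rightarrow> (int \<times> int) set \<Rightarrow> (int \<times> int) set" where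
  "h N i = (THE l. l \<in> I_set N \<and> (\<exists>\<gamma>\<in>SL2. mmul (W N) (rep N i) = mmul \<gamma> (A_mat N l)))"

end

theory Submission
  imports Defs
begin

definition prim :: "nat \<Rightarrow> int \<Rightarrow> int \<Rightarrow> bool" where
  "prim N x y \<longleftrightarrow> gcd (gcd x y) (int N) = 1"

lemma dvd_swap: "(n::int) dvd a - b \<Longrightarrow> n dvd b - a"
  by (metis dvd_minus_iff minus_diff_eq)

lemma pclass_sub:
  assumes "coprime t (int N)" "int N dvd x' - t*x" "int N dvd y' - t*y"
  shows "pclass N x' y' \<subseteq> pclass N x y"
proof
  fix z assume "z \<in> pclass N x' y'"
  then obtain k where k: "coprime k (int N)" "z = ((k*x') mod int N, (k*y') mod int N)"
    unfolding pclass_def by blast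
  have "(k*x') mod int N = ((k*t)*x) mod int N"
  proof -
    have e: "k*x' - (k*t)*x = k*(x' - t*x)" by (simp add: algebra_simps)
    have "int N dvd k*x' - (k*t)*x" unfolding e using assms(2) by (rule dvd_mult)
    then show ?thesis by (simp add: mod_eq_dvd_iff)
  qed
  moreover have "(k*y') mod int N = ((k*t)*y) mod int N"
  proof -
    have e: "k*y' - (k*t)*y = k*(y' - t*y)" by (simp add: algebra_simps)
    have "int N dvd k*y' - (k*t)*y" unfolding e using assms(3) by (rule dvd_mult)
    then show ?thesis by (simp add: mod_eq_dvd_iff)
  qed
  moreover have "coprime (k*t) (int N)" using k(1) assms(1) by simp
  ultimately show "z \<in> pclass N x y" unfolding pclass_def using k(2) by blast
qed

lemma dvd_from_diff: "(g::int) dvd n \<Longrightarrow> n dvd a - b \<Longrightarrow> g dvd a \<Longrightarrow> g dvd b"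
proof -
  assume "g dvd n" "n dvd a - b" "g dvd a"
  then have "g dvd a - b" using dvd_trans by blast
  then have "g dvd a - (a - b)" using \<open>g dvd a\<close> by (rule dvd_diff[rotated])
  then show ?thesis by simp
qed

lemma crit_sub:
  assumes p1: "prim N x y" and p2: "prim N x' y'" and d: "int N dvd x*y' - x'*y"
  shows "pclass N x' y' \<subseteq> pclass N x y"
proof -
  obtain u0 v0 where uv0: "u0 * gcd x y + v0 * int N = 1"
    using bezout_int[of "gcd x y" "int N"] p1 unfolding prim_def by auto
  obtain u1 v1 where uv1: "u1 * x + v1 * y = gcd x y" using bezout_int by blast
  define u where "u = u0*u1"
  define v where "v = u0*v1"
  have "u*x+v*y = u0*(u1 * x + v1 * y)" unfolding u_def v_def by (simp add: algebra_simps)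
  then have e: "u*x + v*y - 1 = - v0 * int N" using uv0 uv1 by simp
  define t where "t = u*x' + v*y'"
  have i1: "t*x - x' = x'*(u*x+v*y-1) + v*(x*y' - x'*y)" unfolding t_def by (simp add: algebra_simps)
  have i2: "t*y - y' = y'*(u*x+v*y-1) - u*(x*y' - x'*y)" unfolding t_def by (simp add: algebra_simps)
  have d1: "int N dvd t*x - x'" unfolding i1 e using d by simp
  have d2: "int N dvd t*y - y'" unfolding i2 e using d by simp
  have "coprime t (int N)"
  proof (rule coprimeI)
    fix g assume g: "g dvd t" "g dvd int N"
    have "g dvd x'" using dvd_from_diff[OF g(2) d1] g(1) by simp
    moreover have "g dvd y'" using dvd_from_diff[OF g(2) d2] g(1) by simp
    ultimately have "g dvd gcd (gcd x' y') (int N)" using g by simp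
    then show "is_unit g" using p2 unfolding prim_def by simp
  qed
  then show ?thesis using pclass_sub dvd_swap[OF d1] dvd_swap[OF d2] by blast
qed

lemma crit_eq:
  assumes "prim N x y" "prim N x' y'" "int N dvd x*y' - x'*y"
  shows "pclass N x y = pclass N x' y'"
proof
  show "pclass N x' y' \<subseteq> pclass N x y" using crit_sub assms by blast
  have "int N dvd x'*y - x*y'" using dvd_swap[OF assms(3)] .
  then show "pclass N x y \<subseteq> pclass N x' y'" using crit_sub assms by blast
qed

lemma pclass_self: "((x mod int N), (y mod int N)) \<in> pclass N x y"
  unfolding pclass_def by (rule CollectI, rule exI[of _ 1]) simp

lemma crit_dest:
  assumes "pclass N x y = pclass N x' y'"
  obtains k where "coprime k (int N)" "int N dvd x' - k*x" "int N dvd y' - k*y"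
proof -
  have "((x' mod int N), (y' mod int N)) \<in> pclass N x y" using assms pclass_self by simp
  then obtain k where "coprime k (int N)" "x' mod int N = (k*x) mod int N" "y' mod int N = (k*y) mod int N"
    unfolding pclass_def by auto
  then show ?thesis using that by (simp add: mod_eq_dvd_iff)
qed

lemma crit_dest_dvd:
  assumes "pclass N x y = pclass N x' y'"
  shows "int N dvd x*y' - x'*y"
proof -
  obtain k where k: "int N dvd x' - k*x" "int N dvd y' - k*y" using crit_dest[OF assms] by blast
  have "x*y' - x'*y = x*(y' - k*y) - y*(x' - k*x)" by (simp add: algebra_simps)
  then show ?thesis using k by simp
qed

lemma crit_dest_gcd:
  assumes "pclass N x y = pclass N x' y'"
  shows "gcd x (int N) = gcd x' (int N)"
proof -
  obtain k where k: "coprime k (int N)" "int N dvd x' - k*x" using crit_dest[OF assms] by blast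
  have "x' mod int N = (k*x) mod int N" using k(2) by (simp add: mod_eq_dvd_iff)
  then have "gcd x' (int N) = gcd (k*x) (int N)" using gcd_red_int[of x' "int N"] gcd_red_int[of "k*x" "int N"] by simp
  also have "\<dots> = gcd x (int N)" using k(1) by (simp add: gcd_mult_left_left_cancel coprime_commute)
  finally show ?thesis by simp
qed

lemma crit_dest_prim:
  assumes "pclass N x y = pclass N x' y'" "prim N x y"
  shows "prim N x' y'"
proof -
  obtain k where k: "coprime k (int N)" "int N dvd x' - k*x" "int N dvd y' - k*y" using crit_dest[OF assms(1)] by blast
  let ?g = "gcd (gcd x' y') (int N)"
  have gN: "?g dvd int N" by simp
  have "?g dvd x'" by (meson dvd_trans gcd_dvd1)
  then have "?g dvd k*x" using dvd_from_diff[OF gN k(2)] by simp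
  moreover have "coprime ?g k" using coprime_divisors[of ?g "int N" k k] k(1) gN by (simp add: coprime_commute)
  ultimately have gx: "?g dvd x" by (simp add: coprime_dvd_mult_right_iff)
  have "?g dvd y'" by (meson dvd_trans gcd_dvd1 gcd_dvd2)
  then have "?g dvd k*y" using dvd_from_diff[OF gN k(3)] by simp
  with \<open>coprime ?g k\<close> have gy: "?g dvd y" by (simp add: coprime_dvd_mult_right_iff)
  have "?g dvd gcd (gcd x y) (int N)" using gx gy gN by simp
  then show ?thesis using assms(2) unfolding prim_def by simp
qed

lemma aux_a:
  fixes b :: int
  shows "c \<noteq> 0 \<Longrightarrow> \<exists>a n. coprime a b \<and> c dvd a * b ^ n"
proof (induction "nat \<bar>c\<bar>" arbitrary: c rule: less_induct)
  case less
  show ?case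
  proof (cases "coprime c b")
    case True
    then show ?thesis by (intro exI[of _ c] exI[of _ 0]) simp
  next
    case False
    define g where "g = gcd c b"
    have gnu: "\<not> is_unit g" using False unfolding g_def by (simp add: coprime_iff_gcd_eq_1)
    have gpos: "g > 0" using less.prems unfolding g_def by simp
    have "g \<noteq> 1" using gnu by auto
    then have g2: "g \<ge> 2" using gpos by linarith
    define c1 where "c1 = c div g"
    have cc: "c = g * c1" unfolding c1_def g_def by simp
    have c1nz: "c1 \<noteq> 0" using cc less.prems by auto
    have "\<bar>c\<bar> = g * \<bar>c1\<bar>" using cc gpos by (simp add: abs_mult)
    moreover have "2*\<bar>c1\<bar> \<le> g*\<bar>c1\<bar>" by (rule mult_right_mono) (use g2 in auto)
    moreover have "\<bar>c1\<bar> > 0" using c1nz by simp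
    ultimately have "\<bar>c1\<bar> < \<bar>c\<bar>" by linarith
    then have "nat \<bar>c1\<bar> < nat \<bar>c\<bar>" by simp
    from less.hyps[OF this c1nz] obtain a n where an: "coprime a b" "c1 dvd a * b ^ n" by blast
    have "g dvd b" unfolding g_def by simp
    then have "g * c1 dvd b * (a * b ^ n)" using an(2) by (rule mult_dvd_mono)
    then have "c dvd a * b ^ Suc n" unfolding cc by (simp add: algebra_simps)
    then show ?thesis using an(1) by blast
  qed
qed

lemma lemL:
  fixes c b D :: int
  assumes "c \<noteq> 0" "gcd (gcd c b) D = 1"
  shows "\<exists>k. coprime c (b + k*D)"
proof -
  obtain a n where an: "coprime a b" "c dvd a * b ^ n" using aux_a assms(1) by blast
  have "coprime c (b + a*D)"
  proof (rule coprimeI)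
    fix g assume g: "g dvd c" "g dvd b + a*D"
    have ga: "coprime g a"
    proof (rule coprimeI)
      fix h assume h: "h dvd g" "h dvd a"
      have "h dvd b + a*D" using h(1) g(2) by (rule dvd_trans)
      moreover have "h dvd a*D" using h(2) by simp
      ultimately have "h dvd (b + a*D) - a*D" by (rule dvd_diff)
      then have "h dvd b" by simp
      then show "is_unit h" using coprime_common_divisor[OF an(1) h(2)] by simp
    qed
    have "g dvd a * b^n" using g(1) an(2) by (rule dvd_trans)
    then have gbn: "g dvd b^n" using coprime_dvd_mult_right_iff[OF ga, of "b^n"] by simp
    have gb: "coprime g b"
    proof (rule coprimeI)
      fix h assume h: "h dvd g" "h dvd b"
      have "h dvd b + a*D" using h(1) g(2) by (rule dvd_trans)
      then have "h dvd (b + a*D) - b" using h(2) by (rule dvd_diff)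
      then have "h dvd a*D" by simp
      moreover have "coprime h a" using coprime_divisors[OF h(1) dvd_refl ga] .
      ultimately have "h dvd D" using coprime_dvd_mult_right_iff[of h a D] by simp
      moreover have "h dvd c" using h(1) g(1) by (rule dvd_trans)
      ultimately have "h dvd gcd (gcd c b) D" using h(2) by simp
      then show "is_unit h" using assms(2) by simp
    qed
    then have "coprime g (b^n)" by simp
    then show "is_unit g" using coprime_common_divisor[of g "b^n" g] gbn by simp
  qed
  then show ?thesis by blast
qed

lemma coprime_mod_right_int: "(c::int) \<noteq> 0 \<Longrightarrow> coprime c x \<longleftrightarrow> coprime c (x mod c)"
proof -
  have "gcd c x = gcd c (x mod c)" using gcd_red_int[of x c] gcd.commute[of x c] by simp
  then show ?thesis unfolding coprime_iff_gcd_eq_1 by simp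
qed

lemma dN_prop:
  assumes "(c, b) \<in> pairs N"
  shows "\<exists>k. dN N c b = c + b + k * (N div c) \<and> coprime c (dN N c b)"
proof -
  define D where "D = N div c"
  from assms have c1: "c \<ge> 1" and g: "gcd (gcd c b) D = 1" unfolding pairs_def D_def by auto
  have gi: "gcd (gcd (int c) (int b)) (int D) = 1" using g
    by (simp add: gcd_int_int_eq)
  obtain k0 where k0: "coprime (int c) (int b + k0 * int D)" using lemL[OF _ gi] c1 by auto
  define k where "k = nat (k0 mod int c)"
  have kk: "int k = k0 mod int c" unfolding k_def using c1 by simp
  have "k0 mod int c < int c" using c1 by simp
  then have "int k < int c" using kk by linarith
  then have klt: "k < c" by simp
  have "(int b + int k * int D) mod int c = (int b + k0 * int D) mod int c"
  proof -
    have "int c dvd (k0 mod int c - k0)" using mod_eq_dvd_iff[of "k0 mod int c" "int c" k0] by simp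
    then have "int c dvd (int b + int k * int D) - (int b + k0 * int D)"
      unfolding kk by (simp add: left_diff_distrib[symmetric])
    then show ?thesis by (simp add: mod_eq_dvd_iff)
  qed
  then have "coprime (int c) (int b + int k * int D)"
  proof -
    have cnz: "int c \<noteq> 0" using c1 by simp
    have "coprime (int c) ((int b + k0 * int D) mod int c)"
      using iffD1[OF coprime_mod_right_int[OF cnz] k0] .
    then have "coprime (int c) ((int b + int k * int D) mod int c)" using \<open>(int b + int k * int D) mod int c = (int b + k0 * int D) mod int c\<close> by simp
    then show ?thesis using iffD2[OF coprime_mod_right_int[OF cnz]] by blast
  qed
  then have ck: "coprime c (b + k * D)"
    using coprime_int_iff[of c "b + k*D"] by simp
  define S where "S = {c + b + k * D | k. k \<le> c - 1 \<and> coprime c (b + k * D)}"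
  have fin: "finite S"
  proof -
    have "S \<subseteq> (\<lambda>k. c + b + k * D) ` {..c-1}" unfolding S_def by auto
    then show ?thesis by (rule finite_subset) simp
  qed
  have "k \<le> c - 1" using klt by simp
  then have ne: "S \<noteq> {}" unfolding S_def using ck by blast
  have "dN N c b \<in> S" unfolding dN_def S_def[symmetric] D_def[symmetric] using Min_in[OF fin ne] by simp
  then obtain k where k: "dN N c b = c + b + k * D" "coprime c (b + k * D)" unfolding S_def by blast
  have "gcd c (c + (b + k * D)) = gcd c (b + k*D)" by (rule gcd_add2)
  then have "coprime c (c + b + k * D)" using k(2) by (simp add: coprime_iff_gcd_eq_1 add.assoc)
  then show ?thesis using k(1) unfolding D_def by auto
qed

lemma pair_exists:
  assumes N1: "N \<ge> 1" and px: "prim N x y"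
  shows "\<exists>c b. (c, b) \<in> pairs N \<and> pclass N (int c) (int (dN N c b)) = pclass N x y"
proof -
  define c where "c = nat (gcd x (int N))"
  have ci: "int c = gcd x (int N)" unfolding c_def by simp
  have "gcd x (int N) \<noteq> 0" using N1 by simp
  then have "int c \<noteq> 0" using ci by simp
  then have c1: "c \<ge> 1" by simp
  have cdvdi: "int c dvd int N" unfolding ci by simp
  then have cdvd: "c dvd N" by simp
  define D where "D = N div c"
  have ND: "N = c * D" unfolding D_def using cdvd by simp
  have NDi: "int N = int c * int D" using ND by simp
  have "D \<noteq> 0" using ND N1 by auto
  then have Dpos: "D > 0" by simp
  define x1 where "x1 = x div int c"
  have xx: "x = int c * x1" unfolding x1_def ci by simp
  have "gcd x (int N) = int c * gcd x1 (int D)" unfolding xx NDi by (simp add: gcd_mult_left)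
  then have gx1: "gcd x1 (int D) = 1" using ci c1 N1 by auto
  obtain u w where uw: "u * x1 + w * int D = 1" using bezout_int[of x1 "int D"] gx1 by auto
  define q where "q = (u*y - int c) div int D"
  define b where "b = nat ((u*y - int c) mod int D)"
  have bi: "int b = (u*y - int c) mod int D" unfolding b_def using Dpos by simp
  have bq: "int b = u*y - int c - int D * q" unfolding bi q_def by (simp add: minus_div_mult_eq_mod[symmetric] algebra_simps)
  have "(u*y - int c) mod int D < int D" using Dpos by simp
  then have "int b < int D" using bi by linarith
  then have bD: "b < D" by simp
  have gcb: "gcd (gcd c b) D = 1"
  proof -
    define g where "g = gcd (gcd (int c) (int b)) (int D)"
    have gc: "g dvd int c" and gb: "g dvd int b" and gD: "g dvd int D" unfolding g_def
      by (meson dvd_trans gcd_dvd1 gcd_dvd2)+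
    have "g dvd int b + int c + int D * q" using gc gb gD by simp
    then have guy: "g dvd u*y" using bq by simp
    have "coprime g u"
    proof (rule coprimeI)
      fix h assume h: "h dvd g" "h dvd u"
      have "h dvd int D" using h(1) gD by (rule dvd_trans)
      then have "h dvd u * x1 + w * int D" using h(2) by simp
      then show "is_unit h" using uw by simp
    qed
    then have gy: "g dvd y" using guy coprime_dvd_mult_right_iff[of g u y] by simp
    have gx: "g dvd x" unfolding xx using gc by simp
    have gN: "g dvd int N" unfolding NDi using gD by simp
    have "g dvd gcd (gcd x y) (int N)" using gx gy gN by simp
    then have "g dvd 1" using px unfolding prim_def by simp
    moreover have "g \<ge> 0" unfolding g_def by simp
    ultimately have "g = 1" by simp
    then show ?thesis unfolding g_def by (simp add: gcd_int_int_eq)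
  qed
  have pr: "(c, b) \<in> pairs N" unfolding pairs_def using c1 cdvd bD gcb D_def by simp
  obtain k where k: "dN N c b = c + b + k * D" "coprime c (dN N c b)" using dN_prop[OF pr] unfolding D_def by blast
  define d where "d = dN N c b"
  have di: "int d = int c + int b + int k * int D" using k(1) unfolding d_def by simp
  have pd: "prim N (int c) (int d)" unfolding prim_def using k(2) unfolding d_def
    by (simp add: coprime_iff_gcd_eq_1 gcd_int_int_eq)
  have e1: "int c * y - int d * x = int c * y * (1 - u*x1) + int N * (x1 * (q - int k))"
    unfolding di xx NDi bq by (simp add: algebra_simps)
  have h: "1 - u*x1 = w * int D" using uw by simp
  have e2: "int c * y - int d * x = int c * y * (w * int D) + int N * (x1 * (q - int k))"
    using e1 unfolding h .
  have "int c * y * (w * int D) + int N * (x1 * (q - int k)) = int N * (y * w + x1 * (q - int k))"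
    unfolding NDi by (simp add: algebra_simps)
  then have "int c * y - int d * x = int N * (y * w + x1 * (q - int k))"
    using e2 by simp
  then have "int N dvd int c * y - int d * x" by simp
  then have "pclass N (int c) (int d) = pclass N x y" using crit_eq[OF pd px] by (simp add: mult.commute)
  then show ?thesis using pr unfolding d_def by blast
qed

lemma pair_unique:
  assumes N1: "N \<ge> 1" and p1: "(c, b) \<in> pairs N" and p2: "(c', b') \<in> pairs N"
    and e: "pclass N (int c) (int (dN N c b)) = pclass N (int c') (int (dN N c' b'))"
  shows "c = c' \<and> b = b'"
proof -
  have cd: "c dvd N" "c' dvd N" and c1: "c \<ge> 1" and bD: "b < N div c" "b' < N div c'"
    using p1 p2 unfolding pairs_def by auto
  have "gcd (int c) (int N) = gcd (int c') (int N)" using crit_dest_gcd[OF e] .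
  then have cc: "c = c'" using cd by (simp add: gcd_int_int_eq gcd_nat.absorb1)
  define D where "D = N div c"
  have "N = c * D" unfolding D_def using cd(1) by simp
  then have NDi: "int N = int c * int D" by simp
  obtain kk where kk: "dN N c b = c + b + kk * D" using dN_prop[OF p1] unfolding D_def by blast
  obtain kk' where kk': "dN N c' b' = c + b' + kk' * D" using dN_prop[OF p2] unfolding D_def cc by blast
  obtain t where t: "int N dvd int c' - t * int c" "int N dvd int (dN N c' b') - t * int (dN N c b)"
    using crit_dest[OF e] by blast
  have "int c * int D dvd int c * (1 - t)" using t(1) unfolding NDi cc by (simp add: algebra_simps)
  then have D1: "int D dvd 1 - t" using c1 by (subst (asm) dvd_times_left_cancel_iff) auto
  have DN: "int D dvd int N" unfolding NDi by simp
  have "int D dvd (int (dN N c' b') - t * int (dN N c b)) - (1 - t) * int (dN N c b)"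
    using dvd_trans[OF DN t(2)] D1 by (simp add: dvd_diff)
  then have "int D dvd int (dN N c' b') - int (dN N c b)" by (simp add: algebra_simps)
  then have "int D dvd (int b' - int b) + (int kk' - int kk) * int D"
    unfolding kk kk' by (simp add: algebra_simps)
  then have "int D dvd int b' - int b" by (simp add: dvd_add_left_iff)
  then have "int b' mod int D = int b mod int D" by (simp add: mod_eq_dvd_iff)
  moreover have "int b' < int D" "int b < int D" using bD unfolding D_def cc by auto
  ultimately have "b' = b" by simp
  then show ?thesis using cc by simp
qed

lemma A_mat_char:
  assumes N1: "N \<ge> 1" and l: "l \<in> I_set N"
  shows "\<exists>c b. (c, b) \<in> pairs N \<and> pclass N (int c) (int (dN N c b)) = l \<and> A_mat N l = M2 (int c) (int b) 0 (int (N div c))"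
proof -
  from l obtain x y where xy0: "l = pclass N x y" "gcd (gcd x y) (int N) = 1" unfolding I_set_def by auto
  then have xy: "l = pclass N x y" "prim N x y" unfolding prim_def by auto
  obtain c b where cb: "(c, b) \<in> pairs N" "pclass N (int c) (int (dN N c b)) = l"
    using pair_exists[OF N1 xy(2)] xy(1) by blast
  have "A_mat N l = M2 (int c) (int b) 0 (int (N div c))"
    unfolding A_mat_def
  proof (rule the_equality)
    show "\<exists>c' b'. (c', b') \<in> pairs N \<and> pclass N (int c') (int (dN N c' b')) = l \<and>
          M2 (int c) (int b) 0 (int (N div c)) = M2 (int c') (int b') 0 (int (N div c'))"
      using cb by blast
  next
    fix M assume "\<exists>c' b'. (c', b') \<in> pairs N \<and> pclass N (int c') (int (dN N c' b')) = l \<and> M = M2 (int c') (int b') 0 (int (N div c'))"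
    then obtain c' b' where "(c', b') \<in> pairs N" "pclass N (int c') (int (dN N c' b')) = l" "M = M2 (int c') (int b') 0 (int (N div c'))" by blast
    moreover have "c = c' \<and> b = b'" using pair_unique[OF N1 cb(1) \<open>(c', b') \<in> pairs N\<close>] cb(2) calculation(2) by simp
    ultimately show "M = M2 (int c) (int b) 0 (int (N div c))" by simp
  qed
  then show ?thesis using cb by blast
qed

lemma prim_add: "prim N x (x + y) = prim N x y"
  unfolding prim_def by (metis gcd_add2)

lemma prim_coprime: "coprime x y \<Longrightarrow> prim N x y"
  unfolding prim_def by (simp add: coprime_iff_gcd_eq_1)

lemma prim_mono: "prim (n*m) x y \<Longrightarrow> prim n x y"
proof -
  assume a: "prim (n*m) x y"
  let ?g = "gcd (gcd x y) (int n)"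
  have g1: "?g dvd gcd x y" by (rule gcd_dvd1)
  have "int n dvd int (n*m)" by simp
  then have g2: "?g dvd int (n*m)" using gcd_dvd2[of "gcd x y" "int n"] by (rule dvd_trans[rotated])
  have g3: "?g dvd gcd (gcd x y) (int (n*m))" using g1 g2 by (rule gcd_greatest)
  have h1: "gcd (gcd x y) (int (n*m)) = 1" using a unfolding prim_def .
  have "?g dvd 1" using g3 unfolding h1 .
  then have "is_unit ?g" .
  then show ?thesis unfolding prim_def using is_unit_gcd_iff by blast
qed

lemma lift:
  assumes N1: "N \<ge> 1" and p: "prim N x y"
  shows "\<exists>x' y'. coprime x' y' \<and> pclass N x' y' = pclass N x y"
proof -
  have "\<exists>x' y'. coprime x' y' \<and> int N dvd x' - x \<and> int N dvd y' - y"
  proof (cases "x = 0")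
    case True
    then have "gcd y (int N) = 1" using p unfolding prim_def by simp
    then have "coprime (int N) y" by (simp add: coprime_iff_gcd_eq_1 gcd.commute)
    then show ?thesis using True by (intro exI[of _ "int N"] exI[of _ y]) simp
  next
    case False
    obtain k where "coprime x (y + k * int N)" using lemL[OF False, of y "int N"] p unfolding prim_def by blast
    then show ?thesis by (intro exI[of _ x] exI[of _ "y + k * int N"]) simp
  qed
  then obtain x' y' where xy: "coprime x' y'" "int N dvd x' - x" "int N dvd y' - y" by blast
  have "x*y' - x'*y = x*(y' - y) - y*(x' - x)" by (simp add: algebra_simps)
  then have "int N dvd x*y' - x'*y" using xy by simp
  then have "pclass N x y = pclass N x' y'" using crit_eq[OF p prim_coprime[OF xy(1)]] by simp
  then show ?thesis using xy(1) by metis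
qed

lemma rep_prop:
  assumes N1: "N \<ge> 1" and p: "prim N x y"
  shows "rep N (pclass N x y) \<in> SL2 \<and> coset_class N (rep N (pclass N x y)) = pclass N x y"
proof -
  obtain x' y' where xy: "coprime x' y'" "pclass N x' y' = pclass N x y" using lift[OF N1 p] by blast
  obtain u v where uv: "u * x' + v * y' = gcd x' y'" using bezout_int by blast
  then have "v * y' - (-u) * x' = 1" using xy(1) by (simp add: coprime_iff_gcd_eq_1 algebra_simps)
  then have "M2 v (-u) x' y' \<in> SL2" unfolding SL2_def by blast
  moreover have "coset_class N (M2 v (-u) x' y') = pclass N x y" using xy(2) by simp
  ultimately have "\<exists>R. R \<in> SL2 \<and> coset_class N R = pclass N x y" by blast
  then show ?thesis unfolding rep_def by (rule someI_ex)
qed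


lemma SL2I: "a*d - b*c = 1 \<Longrightarrow> M2 a b c d \<in> SL2"
  unfolding SL2_def mem_Collect_eq by (intro exI conjI) (rule refl)

lemma SL2E: "M \<in> SL2 \<Longrightarrow> \<exists>a b c d. M = M2 a b c d \<and> a*d - b*c = 1"
  unfolding SL2_def mem_Collect_eq by assumption

lemma I_setI: "prim N x y \<Longrightarrow> pclass N x y \<in> I_set N"
  unfolding I_set_def prim_def mem_Collect_eq by (intro exI conjI) (rule refl)
lemma h_char:
  assumes N1: "N \<ge> 1" and p: "prim N x y"
  shows "h N (pclass N x y) = pclass N x (x + y)"
proof -
  define i where "i = pclass N x y"
  obtain R where R: "R = rep N i" by blast
  have RS: "R \<in> SL2" and Rc: "coset_class N R = i" using rep_prop[OF N1 p] R unfolding i_def by auto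
  obtain p0 q r s where Rm: "R = M2 p0 q r s" by (cases R)
  have det: "p0*s - q*r = 1" using SL2E[OF RS] Rm by auto
  have ri: "pclass N r s = i" using Rc Rm by simp
  have crs: "coprime r s"
  proof (rule coprimeI)
    fix g assume "g dvd r" "g dvd s"
    then have "g dvd p0*s - q*r" by simp
    then show "is_unit g" using det by simp
  qed
  have prs: "prim N r (r + s)" using prim_coprime[OF crs] prim_add by simp
  have pxy2: "prim N x (x + y)" using p prim_add by simp
  define l0 where "l0 = pclass N r (r + s)"
  have "int N dvd r * y - x * s" using crit_dest_dvd[of N r s x y] ri unfolding i_def by simp
  then have "int N dvd r * (x + y) - x * (r + s)" by (simp add: algebra_simps)
  then have l0e: "l0 = pclass N x (x + y)" unfolding l0_def using crit_eq[OF prs pxy2] by simp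
  have l0I: "l0 \<in> I_set N" unfolding l0_def by (rule I_setI[OF prs])
  have WR: "mmul (W N) R = M2 r s (- int N * p0) (- int N * q)" unfolding Rm W_def by simp
  have "h N i = l0"
    unfolding h_def R[symmetric]
  proof (rule the_equality)
    obtain c b where cb: "(c, b) \<in> pairs N" "pclass N (int c) (int (dN N c b)) = l0"
      "A_mat N l0 = M2 (int c) (int b) 0 (int (N div c))" using A_mat_char[OF N1 l0I] by blast
    define D where "D = N div c"
    have cd: "c dvd N" and c1: "c \<ge> 1" using cb(1) unfolding pairs_def by auto
    have "N = c * D" unfolding D_def using cd by simp
    then have NDi: "int N = int c * int D" by simp
    obtain kk where kk: "dN N c b = c + b + kk * D" using dN_prop[OF cb(1)] unfolding D_def by blast
    define d where "d = int (dN N c b)"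
    have di: "d = int c + int b + int kk * int D" unfolding d_def kk by simp
    have "gcd (int c) (int N) = gcd r (int N)" using crit_dest_gcd[of N "int c" d r "r + s"] cb(2) unfolding l0_def d_def by simp
    moreover have "gcd (int c) (int N) = int c" using cd by (simp add: gcd_int_int_eq gcd_nat.absorb1)
    ultimately have "int c = gcd r (int N)" by simp
    then have "int c dvd r" using gcd_dvd1[of r "int N"] by simp
    then obtain r1 where r1: "r = int c * r1" by (elim dvdE)
    have "int N dvd int c * (r + s) - r * d" using crit_dest_dvd[of N "int c" d r "r + s"] cb(2) unfolding l0_def d_def by simp
    moreover have "int c * (r + s) - r * d = int c * (s - r1 * int b - r1 * int kk * int D)"
      unfolding r1 di by (simp add: algebra_simps)
    ultimately have "int c * int D dvd int c * (s - r1 * int b - r1 * int kk * int D)" unfolding NDi by simp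
    then have "int D dvd s - r1 * int b - r1 * int kk * int D" using c1 by (subst (asm) dvd_times_left_cancel_iff) auto
    then have "int D dvd (s - r1 * int b - r1 * int kk * int D) + r1 * int kk * int D" by (rule dvd_add) simp
    moreover have "(s - r1 * int b - r1 * int kk * int D) + r1 * int kk * int D = s - r1 * int b" by simp
    ultimately have "int D dvd s - r1 * int b" by simp
    then obtain e where e: "s - r1 * int b = int D * e" by (elim dvdE)
    define \<gamma> where "\<gamma> = M2 r1 e (- p0 * int D) (p0 * int b - q * int c)"
    have "r1 * (p0 * int b - q * int c) - e * (- p0 * int D) = p0 * (s - r1 * int b) + r1 * p0 * int b - q * r"
      unfolding e r1 by (simp add: algebra_simps)
    also have "\<dots> = p0*s - q*r" by (simp add: algebra_simps)
    finally have "r1 * (p0 * int b - q * int c) - e * (- p0 * int D) = 1" using det by simp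
    then have "\<gamma> \<in> SL2" unfolding \<gamma>_def by (rule SL2I)
    moreover have "mmul (W N) R = mmul \<gamma> (A_mat N l0)"
    proof -
      have s_eq: "s = r1 * int b + int D * e" using e by simp
      show ?thesis unfolding WR cb(3) \<gamma>_def D_def[symmetric] using s_eq r1 NDi
        by (simp add: algebra_simps)
    qed
    ultimately show "l0 \<in> I_set N \<and> (\<exists>\<gamma>\<in>SL2. mmul (W N) R = mmul \<gamma> (A_mat N l0))" using l0I by blast
  next
    fix l assume l: "l \<in> I_set N \<and> (\<exists>\<gamma>\<in>SL2. mmul (W N) R = mmul \<gamma> (A_mat N l))"
    then obtain \<gamma> where g: "mmul (W N) R = mmul \<gamma> (A_mat N l)" by blast
    obtain c b where cb: "(c, b) \<in> pairs N" "pclass N (int c) (int (dN N c b)) = l"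
      "A_mat N l = M2 (int c) (int b) 0 (int (N div c))" using A_mat_char[OF N1] l by blast
    define D where "D = N div c"
    have cd: "c dvd N" using cb(1) unfolding pairs_def by auto
    have "N = c * D" unfolding D_def using cd by simp
    then have NDi: "int N = int c * int D" by simp
    obtain kk where kk: "dN N c b = c + b + kk * D" and cop: "coprime c (dN N c b)" using dN_prop[OF cb(1)] unfolding D_def by blast
    define d where "d = int (dN N c b)"
    have di: "d = int c + int b + int kk * int D" unfolding d_def kk by simp
    have "coprime (int c) d" unfolding d_def using cop coprime_int_iff by simp
    then have pcd: "prim N (int c) d" by (rule prim_coprime)
    obtain g1 g2 g3 g4 where gm: "\<gamma> = M2 g1 g2 g3 g4" by (cases \<gamma>)
    have rs: "r = g1 * int c" "s = g1 * int b + g2 * int D" using g unfolding WR gm cb(3) D_def by auto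
    have "int c * (r + s) - r * d = int N * (g2 - g1 * int kk)"
      unfolding rs di NDi by (simp add: algebra_simps)
    then have "int N dvd int c * (r + s) - r * d" by simp
    then have "pclass N (int c) d = pclass N r (r + s)" using crit_eq[OF pcd prs] by simp
    then show "l = l0" using cb(2) unfolding l0_def d_def by simp
  qed
  then show ?thesis using l0e unfolding i_def by simp
qed

lemma sigma_char:
  assumes n1: "n \<ge> 1" and m1: "m \<ge> 1" and p: "prim (n*m) x y"
  shows "sigma m n (pclass (n*m) x y) = pclass n x y"
  unfolding sigma_def
proof (rule the_equality)
  show "\<exists>x' y'. pclass (n * m) x y = pclass (n * m) x' y' \<and> pclass n x y = pclass n x' y'" by blast
next
  fix j assume "\<exists>x' y'. pclass (n * m) x y = pclass (n * m) x' y' \<and> j = pclass n x' y'"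
  then obtain x' y' where e: "pclass (n * m) x y = pclass (n * m) x' y'" "j = pclass n x' y'" by blast
  have p': "prim (n*m) x' y'" using crit_dest_prim[OF e(1) p] .
  have "int (n*m) dvd x * y' - x' * y" using crit_dest_dvd[OF e(1)] .
  then have "int n dvd x * y' - x' * y" by (metis dvd_mult_left of_nat_mult)
  then have "pclass n x y = pclass n x' y'" using crit_eq[OF prim_mono[OF p] prim_mono[OF p']] by simp
  then show "j = pclass n x y" using e(2) by simp
qed

theorem mainTheorem16:
  fixes n m :: nat and i :: "(int \<times> int) set"
  assumes "n \<ge> 1" and "m \<ge> 1" and "i \<in> I_set (n * m)"
  shows "h n (sigma m n i) = sigma m n (h (n * m) i)"
proof -
  from assms(3) obtain x y where xy0: "i = pclass (n*m) x y" "gcd (gcd x y) (int (n*m)) = 1" unfolding I_set_def by auto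
  then have p: "prim (n*m) x y" unfolding prim_def by simp
  have nm1: "n * m \<ge> 1" using assms(1,2) by simp
  have "h n (sigma m n i) = pclass n x (x + y)"
    unfolding xy0(1) sigma_char[OF assms(1,2) p] using h_char[OF assms(1) prim_mono[OF p]] .
  moreover have "sigma m n (h (n * m) i) = pclass n x (x + y)"
    unfolding xy0(1) h_char[OF nm1 p] using sigma_char[OF assms(1,2)] p prim_add by simp
  ultimately show ?thesis by simp
qed

end
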